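(* Let $0\le q<\tfrac12$ and $p=1-q$. Let $X_1,X_2,\dots$ be i.i.d. letters in $\{S,H\}$ with $\mathbb{P}[X_i=S]=q$ and $\mathbb{P}[X_i=H]=p$. Define the random variable $L$ as follows: (i) if $X_1=H$, then $L=1$; (ii) if $X_1X_2=SH$, then $L=2$; (iii) if $X_1X_2=SS$, let $m\ge 3$ be the first index with $X_m=H$ and (number of $S$ among $X_1,\dots,X_m$) $-$ (number of $H$ among $X_1,\dots,X_m$) $=1$, and let $L$ be the number of letters $S$ among $X_1,\dots,X_m$. Then $$\mathbb{E}[L]=1+\frac{p^2q}{p-q}.$$
   Context: This models one attack cycle of the Selfish Mining strategy in Bitcoin: each newly validated block is found by the selfish miner (letter $S$, relative hashrate $q$) or by the honest miners (letter $H$, relative hashrate $p$), independently, and $L$ is the number of blocks added to the official blockchain during the attack cycle. *)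

theory Defs
  imports "HOL-Probability.Probability"
begin

text \<open>Letters are encoded as booleans: True = S (selfish miner), False = H (honest).
  A run X_1 X_2 ... is a stream, with X_i = w !! (i - 1).\<close>

definition nS :: "bool stream \<Rightarrow> nat \<Rightarrow> nat" where
  "nS w m = card {i. i < m \<and> w !! i}"

definition nH :: "bool stream \<Rightarrow> nat \<Rightarrow> nat" where
  "nH w m = card {i. i < m \<and> \<not> w !! i}"

definition stop_iii :: "bool stream \<Rightarrow> nat \<Rightarrow> bool" where
  "stop_iii w m \<longleftrightarrow> 3 \<le> m \<and> \<not> w !! (m - 1) \<and> int (nS w m) - int (nH w m) = 1"

text \<open>The random variable L (set to 0 on the null event where case (iii) never stops).\<close>
definition L_len :: "bool stream \<Rightarrow> nat" where
  "L_len w =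
     (if \<not> w !! 0 then 1
      else if \<not> w !! 1 then 2
      else if (\<exists>m. stop_iii w m) then nS w (LEAST m. stop_iii w m)
      else 0)"

end

theory Submission
  imports Defs
begin


primrec hit :: "nat \<Rightarrow> nat \<Rightarrow> bool stream \<Rightarrow> bool" where
  "hit 0 k w = (k = 0)"
| "hit (Suc n) k w = (k = 0 \<or> (if shd w then hit n (Suc k) (stl w) else hit n (k - 1) (stl w)))"

primrec cnt :: "nat \<Rightarrow> nat \<Rightarrow> bool stream \<Rightarrow> nat" where
  "cnt 0 k w = 0"
| "cnt (Suc n) k w = (if k = 0 then 0 else (if shd w then Suc (cnt n (Suc k) (stl w)) else cnt n (k - 1) (stl w)))"

definition HH :: "nat \<Rightarrow> bool stream \<Rightarrow> bool" where "HH k w = (\<exists>n. hit n k w)"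
definition CC :: "nat \<Rightarrow> bool stream \<Rightarrow> nat" where
  "CC k w = (if HH k w then cnt (LEAST n. hit n k w) k w else 0)"

lemma hit_mono: "hit n k w \<Longrightarrow> n \<le> m \<Longrightarrow> hit m k w"
proof (induction n arbitrary: k w m)
  case 0 then show ?case by (cases m) auto
next
  case (Suc n) then show ?case by (cases m) (auto split: if_splits)
qed

lemma cnt_stable: "hit n k w \<Longrightarrow> n \<le> m \<Longrightarrow> cnt m k w = cnt n k w"
proof (induction n arbitrary: k w m)
  case 0 then show ?case by (cases m) auto
next
  case (Suc n) then show ?case by (cases m) (auto split: if_splits)
qed

lemma cnt_mono: "n \<le> m \<Longrightarrow> cnt n k w \<le> cnt m k w"
proof (induction n arbitrary: k w m)
  case 0 then show ?case by simp
next
  case (Suc n) then show ?case by (cases m) auto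
qed

lemma CC_eq: assumes "hit n k w" shows "CC k w = cnt n k w"
proof -
  have h: "HH k w" using assms HH_def by blast
  let ?l = "LEAST n. hit n k w"
  have "hit ?l k w" "?l \<le> n" using assms by (auto intro: LeastI Least_le)
  then show ?thesis using h cnt_stable[of ?l k w n] by (simp add: CC_def)
qed

lemma CC_notHH: "\<not> HH k w \<Longrightarrow> CC k w = 0" by (simp add: CC_def)

lemma HH_0: "HH 0 w" unfolding HH_def by (rule exI[of _ 0]) simp

lemma HH_Cons: "HH (Suc j) (x ## w) = HH (if x then Suc (Suc j) else j) w"
proof
  assume "HH (Suc j) (x ## w)"
  then obtain n where "hit n (Suc j) (x ## w)" by (auto simp: HH_def)
  then show "HH (if x then Suc (Suc j) else j) w" by (cases n) (auto simp: HH_def)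
next
  assume "HH (if x then Suc (Suc j) else j) w"
  then obtain n where "hit n (if x then Suc (Suc j) else j) w" by (auto simp: HH_def)
  then have "hit (Suc n) (Suc j) (x ## w)" by auto
  then show "HH (Suc j) (x ## w)" unfolding HH_def by blast
qed

lemma CC_0: "CC 0 w = 0"
  using CC_eq[of 0 0 w] by simp

lemma CC_Cons: "CC (Suc j) (x ## w) = (if x then (if HH (Suc (Suc j)) w then Suc (CC (Suc (Suc j)) w) else 0) else CC j w)"
proof (cases "HH (if x then Suc (Suc j) else j) w")
  case True
  then obtain n where n: "hit n (if x then Suc (Suc j) else j) w" by (auto simp: HH_def)
  then have "hit (Suc n) (Suc j) (x ## w)" by auto
  then have "CC (Suc j) (x ## w) = cnt (Suc n) (Suc j) (x ## w)" by (rule CC_eq)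
  then show ?thesis using n CC_eq[OF n] True by auto
next
  case False
  then have "\<not> HH (Suc j) (x ## w)" using HH_Cons by simp
  then show ?thesis using False by (auto simp: CC_notHH)
qed

lemma card_less_Suc: "card {i. i < Suc m \<and> P i} = card {i. i < m \<and> P i} + (if P m then 1 else 0)"
proof -
  have "{i. i < Suc m \<and> P i} = {i. i < m \<and> P i} \<union> (if P m then {m} else {})"
    by (auto simp: less_Suc_eq)
  then show ?thesis by auto
qed

lemma nS_0[simp]: "nS w 0 = 0" by (simp add: nS_def)
lemma nH_0[simp]: "nH w 0 = 0" by (simp add: nH_def)
lemma nS_Suc: "nS w (Suc m) = nS w m + (if w !! m then 1 else 0)"
  unfolding nS_def by (rule card_less_Suc)
lemma nH_Suc: "nH w (Suc m) = nH w m + (if w !! m then 0 else 1)"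
  unfolding nH_def by (subst card_less_Suc) simp

lemma nS_Cons: "nS (x ## w) (Suc m) = (if x then 1 else 0) + nS w m"
  by (induction m) (auto simp: nS_Suc)
lemma nH_Cons: "nH (x ## w) (Suc m) = (if x then 0 else 1) + nH w m"
  by (induction m) (auto simp: nH_Suc)

definition lv :: "nat \<Rightarrow> bool stream \<Rightarrow> nat \<Rightarrow> int" where
  "lv k w m = int k + int (nS w m) - int (nH w m)"

lemma lv_0[simp]: "lv k w 0 = int k" by (simp add: lv_def)
lemma lv_Suc: "lv k w (Suc m) = lv k w m + (if w !! m then 1 else -1)"
  by (simp add: lv_def nS_Suc nH_Suc)
lemma lv_Cons: "0 < k \<Longrightarrow> lv k (x ## w) (Suc m) = lv (if x then Suc k else k - 1) w m"
  by (simp add: lv_def nS_Cons nH_Cons of_nat_diff)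

lemma lv_first_hit: "lv k w m = 0 \<Longrightarrow> (\<forall>i<m. lv k w i \<noteq> 0) \<Longrightarrow> hit m k w \<and> cnt m k w = nS w m"
proof (induction m arbitrary: k w)
  case 0 then show ?case by simp
next
  case (Suc m)
  obtain x w' where w: "w = x ## w'" by (cases w)
  have k: "0 < k" using Suc.prems(2) by (cases k) auto
  let ?k = "if x then Suc k else k - 1"
  have "lv ?k w' m = 0" using Suc.prems(1) lv_Cons[OF k] w by simp
  moreover have "\<forall>i<m. lv ?k w' i \<noteq> 0" using Suc.prems(2) lv_Cons[OF k] w by auto
  ultimately have "hit m ?k w' \<and> cnt m ?k w' = nS w' m" using Suc.IH by blast
  then show ?case using w k by (auto simp: nS_Cons)
qed

lemma hit_lv: "hit n k w \<Longrightarrow> \<exists>m\<le>n. lv k w m = 0"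
proof (induction n arbitrary: k w)
  case 0 then show ?case by auto
next
  case (Suc n)
  obtain x w' where w: "w = x ## w'" by (cases w)
  show ?case
  proof (cases "k = 0")
    case True then show ?thesis by (intro exI[of _ 0]) auto
  next
    case False
    let ?k = "if x then Suc k else k - 1"
    have "hit n ?k w'" using Suc.prems w False by auto
    then obtain m where "m \<le> n" "lv ?k w' m = 0" using Suc.IH by blast
    then show ?thesis using lv_Cons[of k x w' m] False w by (intro exI[of _ "Suc m"]) auto
  qed
qed

lemma lv_ivt: "lv k w j < 0 \<Longrightarrow> \<exists>i<j. lv k w i = 0"
proof (induction j)
  case 0 then show ?case by simp
next
  case (Suc j)
  show ?case
  proof (cases "lv k w j < 0")
    case True then show ?thesis using Suc.IH by (meson less_SucI)
  next
    case False
    then have "lv k w j = 0" using Suc.prems lv_Suc[of k w j] by (auto split: if_splits)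
    then show ?thesis by blast
  qed
qed

lemma nS_TT: "nS (True ## True ## w) (Suc (Suc j)) = 2 + nS w j"
  by (simp add: nS_Cons)
lemma nH_TT: "nH (True ## True ## w) (Suc (Suc j)) = nH w j"
  by (simp add: nH_Cons)

lemma stop_TT: "stop_iii (True ## True ## w) m \<longleftrightarrow>
   (\<exists>j. m = Suc (Suc j) \<and> 1 \<le> j \<and> \<not> w !! (j - 1) \<and> lv 1 w j = 0)"
proof
  assume h: "stop_iii (True ## True ## w) m"
  then have "3 \<le> m" unfolding stop_iii_def by simp
  then obtain j' where m3: "m = 3 + j'" using le_Suc_ex by blast
  define j where "j = Suc j'"
  have j: "m = Suc (Suc j)" "1 \<le> j" using m3 j_def by auto
  have j': "j = Suc j'" using j_def by simp
  show "\<exists>j. m = Suc (Suc j) \<and> 1 \<le> j \<and> \<not> w !! (j - 1) \<and> lv 1 w j = 0"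
    using h j j' unfolding stop_iii_def lv_def by (auto simp: nS_TT nH_TT)
next
  assume "\<exists>j. m = Suc (Suc j) \<and> 1 \<le> j \<and> \<not> w !! (j - 1) \<and> lv 1 w j = 0"
  then obtain j where j: "m = Suc (Suc j)" "1 \<le> j" "\<not> w !! (j - 1)" "lv 1 w j = 0" by blast
  then obtain j' where j': "j = Suc j'" by (cases j) auto
  show "stop_iii (True ## True ## w) m"
    using j j' unfolding stop_iii_def lv_def by (auto simp: nS_TT nH_TT)
qed

lemma L_len_TT: "L_len (True ## True ## w) = (if HH 1 w then 2 + CC 1 w else 0)"
proof (cases "\<exists>j. lv 1 w j = 0")
  case True
  define j0 where "j0 = (LEAST j. lv 1 w j = 0)"
  have z: "lv 1 w j0 = 0" using True unfolding j0_def by (auto intro: LeastI)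
  have mn: "\<And>i. i < j0 \<Longrightarrow> lv 1 w i \<noteq> 0" unfolding j0_def using not_less_Least by blast
  have j0pos: "1 \<le> j0" using z by (cases j0) auto
  then obtain j' where j': "j0 = Suc j'" by (cases j0) auto
  have nx: "\<not> w !! (j0 - 1)"
  proof
    assume "w !! (j0 - 1)"
    then have "lv 1 w j' = -1" using z j' lv_Suc[of 1 w j'] by simp
    then obtain i where "i < j'" "lv 1 w i = 0" using lv_ivt[of 1 w j'] by auto
    then show False using mn j' by auto
  qed
  have st: "stop_iii (True ## True ## w) (Suc (Suc j0))" using stop_TT j0pos nx z by blast
  have le: "\<And>m. stop_iii (True ## True ## w) m \<Longrightarrow> Suc (Suc j0) \<le> m"
    using stop_TT mn by (metis Suc_le_mono not_le)
  have L: "(LEAST m. stop_iii (True ## True ## w) m) = Suc (Suc j0)"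
    by (rule Least_equality) (use st le in auto)
  have hc: "hit j0 1 w \<and> cnt j0 1 w = nS w j0" using lv_first_hit[of 1 w j0] z mn by blast
  then have "HH 1 w" "CC 1 w = nS w j0" using CC_eq[of j0 1 w] unfolding HH_def by auto
  then show ?thesis using st L unfolding L_len_def by (auto simp: nS_TT)
next
  case False
  then have "\<not> HH 1 w" unfolding HH_def using hit_lv by blast
  moreover have "\<not> stop_iii (True ## True ## w) m" for m using False stop_TT by blast
  ultimately show ?thesis unfolding L_len_def by auto
qed



lemma shd_meas[measurable]: "(\<lambda>w. shd w) \<in> measurable (stream_space (measure_pmf P)) (count_space UNIV)"
proof -
  have "(\<lambda>x. x) \<in> measurable (measure_pmf P) (count_space UNIV)" by simp
  then show ?thesis using measurable_shd by (rule measurable_compose[rotated])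
qed

lemma hit_meas[measurable]: "(\<lambda>w. hit n k w) \<in> measurable (stream_space (measure_pmf P)) (count_space UNIV)"
proof (induction n arbitrary: k)
  case 0 then show ?case by simp
next
  case (Suc n)
  note Suc.IH[measurable]
  show ?case by simp
qed

lemma cnt_meas[measurable]: "(\<lambda>w. cnt n k w) \<in> measurable (stream_space (measure_pmf P)) (count_space UNIV)"
proof (induction n arbitrary: k)
  case 0 then show ?case by simp
next
  case (Suc n)
  note Suc.IH[measurable]
  show ?case by simp
qed

lemma HH_meas[measurable]: "(\<lambda>w. HH k w) \<in> measurable (stream_space (measure_pmf P)) (count_space UNIV)"
  unfolding HH_def by measurable

lemma CC_meas[measurable]: "(\<lambda>w. CC k w) \<in> measurable (stream_space (measure_pmf P)) (count_space UNIV)"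
  unfolding CC_def by measurable



lemma decomp:
  assumes q: "0 \<le> q" "q \<le> 1"
    and f[measurable]: "f \<in> borel_measurable (stream_space (measure_pmf (bernoulli_pmf q)))"
  shows "(\<integral>\<^sup>+w. f w \<partial>stream_space (measure_pmf (bernoulli_pmf q))) =
     ennreal q * (\<integral>\<^sup>+w. f (True ## w) \<partial>stream_space (measure_pmf (bernoulli_pmf q))) +
     ennreal (1 - q) * (\<integral>\<^sup>+w. f (False ## w) \<partial>stream_space (measure_pmf (bernoulli_pmf q)))"
proof -
  show ?thesis
    by (subst prob_space.nn_integral_stream_space[OF prob_space_measure_pmf f], subst nn_integral_measure_pmf,
        subst nn_integral_count_space_finite) (auto simp: UNIV_bool q add.commute)
qed

lemma diff_zero:
  fixes a :: "nat \<Rightarrow> real" and p q B :: real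
  assumes q: "0 \<le> q" "q < p" and a0: "a 0 = 0" and pos: "\<And>k. 0 \<le> a k"
    and bd: "\<And>k. a k \<le> real k * B"
    and rec: "\<And>k. q * (a (Suc (Suc k)) - a (Suc k)) = p * (a (Suc k) - a k)"
  shows "a k = 0"
proof -
  define d where "d k = a (Suc k) - a k" for k
  have drec: "q * d (Suc k) = p * d k" for k using rec[of k] by (simp add: d_def)
  have dz: "\<forall>k. d k = 0"
  proof (cases "q = 0")
    case True then show ?thesis using drec q by simp
  next
    case False
    then have qp: "0 < q" using q by simp
    have d0: "d 0 = 0"
    proof (rule ccontr)
      assume "d 0 \<noteq> 0"
      moreover have "0 \<le> d 0" using pos[of 1] a0 by (simp add: d_def)
      ultimately have d0p: "0 < d 0" by simp
      define e where "e = (p - q) / q * d 0"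
      have ep: "0 < e" unfolding e_def using qp q d0p by simp
      have dge: "d k \<ge> d 0 + real k * e" for k
      proof (induction k)
        case 0 then show ?case by simp
      next
        case (Suc k)
        have eq: "d (Suc k) = d k + (p - q) / q * d k" using drec[of k] qp by (simp add: field_simps)
        have dk: "d 0 \<le> d k" using Suc.IH ep by (smt (verit) mult_nonneg_nonneg of_nat_0_le_iff)
        have "0 \<le> (p - q) / q" using q qp by simp
        then have ge: "(p - q) / q * d k \<ge> e"
          using dk unfolding e_def by (intro mult_left_mono)
        have "real (Suc k) * e = real k * e + e" by (simp add: algebra_simps)
        then show ?case using eq ge Suc.IH by linarith
      qed
      have age: "a k \<ge> e * (real k * (real k - 1) / 2)" for k
      proof (induction k)
        case 0 then show ?case using a0 by simp
      next
        case (Suc k)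
        have "a (Suc k) = a k + d k" by (simp add: d_def)
        then show ?case using Suc dge[of k] d0p by (simp add: algebra_simps)
      qed
      obtain N :: nat where N: "2 * B / e + 1 < real N" using reals_Archimedean2 by blast
      have "e * (real (Suc N) * (real (Suc N) - 1) / 2) \<le> real (Suc N) * B"
        using age[of "Suc N"] bd[of "Suc N"] by linarith
      then have "(real N + 1) * (e * (real N / 2)) \<le> (real N + 1) * B" by (simp add: algebra_simps)
      then have "e * (real N / 2) \<le> B"
        by (rule mult_left_le_imp_le) simp
      then have "real N \<le> 2 * B / e" using ep by (simp add: field_simps)
      then show False using N by simp
    qed
    show ?thesis
    proof
      fix k show "d k = 0"
      proof (induction k)
        case 0 then show ?case using d0 by simp
      next
        case (Suc k) then show ?case using drec[of k] qp by simp
      qed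
    qed
  qed
  show ?thesis
    by (induction k) (use a0 dz in \<open>auto simp: d_def\<close>)
qed


context
  fixes q :: real
  assumes q0: "0 \<le> q" and q1: "q < 1/2"
begin

abbreviation "SS \<equiv> stream_space (measure_pmf (bernoulli_pmf q))"

lemma SS_prob: "prob_space SS"
  by (rule prob_space.prob_space_stream_space[OF prob_space_measure_pmf])

lemma SS_one[simp]: "emeasure SS (space SS) = 1"
  using SS_prob prob_space.emeasure_space_1 by blast

lemma int_one: "(\<integral>\<^sup>+w. 1 \<partial>SS) = 1"
proof -
  have "emeasure SS (space SS) = 1" using SS_prob prob_space.emeasure_space_1 by blast
  then show ?thesis by (simp add: nn_integral_const)
qed

definition "hp k = (\<integral>\<^sup>+w. (if HH k w then 1 else 0) \<partial>SS)"
definition "cc k = (\<integral>\<^sup>+w. ennreal (CC k w) \<partial>SS)"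
definition "ec n k = (\<integral>\<^sup>+w. ennreal (cnt n k w) \<partial>SS)"

lemma q1': "q \<le> 1" using q1 by simp

lemma hp_0: "hp 0 = 1"
  unfolding hp_def by (simp add: HH_0 int_one)

lemma hp_Suc: "hp (Suc j) = ennreal q * hp (Suc (Suc j)) + ennreal (1 - q) * hp j"
  unfolding hp_def by (subst decomp[OF q0 q1']) (auto simp: HH_Cons)

lemma cc_0: "cc 0 = 0"
  unfolding cc_def by (simp add: CC_0)

lemma cc_Suc: "cc (Suc j) = ennreal q * (hp (Suc (Suc j)) + cc (Suc (Suc j))) + ennreal (1 - q) * cc j"
proof -
  have e: "ennreal (real (CC (Suc j) (True ## w))) = (if HH (Suc (Suc j)) w then 1 else 0) + ennreal (CC (Suc (Suc j)) w)" for w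
    by (auto simp: CC_Cons CC_notHH ennreal_plus[symmetric] add.commute)
  have "(\<integral>\<^sup>+w. ennreal (CC (Suc j) (True ## w)) \<partial>SS) = hp (Suc (Suc j)) + cc (Suc (Suc j))"
    unfolding e hp_def cc_def by (rule nn_integral_add) auto
  then show ?thesis
    unfolding cc_def by (subst decomp[OF q0 q1']) (auto simp: CC_Cons cc_def)
qed

lemma ec_0: "ec 0 k = 0" unfolding ec_def by simp
lemma ec_Suc0: "ec (Suc n) 0 = 0" unfolding ec_def by simp
lemma ec_Suc: "ec (Suc n) (Suc j) = ennreal q * (1 + ec n (Suc (Suc j))) + ennreal (1 - q) * ec n j"
proof -
  have t: "(\<integral>\<^sup>+w. 1 + ennreal (real (cnt n (Suc (Suc j)) w)) \<partial>SS) = 1 + ec n (Suc (Suc j))"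
    unfolding ec_def by (subst nn_integral_add) (auto simp: int_one)
  show ?thesis
    unfolding ec_def[of "Suc n"] by (subst decomp[OF q0 q1']) (auto simp: t ec_def)
qed

definition "gg = q / (1 - 2 * q)"

lemma gg_nonneg: "0 \<le> gg" unfolding gg_def using q0 q1 by simp
lemma gg_eq: "gg * (1 - 2 * q) = q" unfolding gg_def using q1 by simp

lemma ec_bound: "ec n k \<le> ennreal (real k * gg)"
proof (induction n arbitrary: k)
  case 0 then show ?case by (simp add: ec_0)
next
  case (Suc n)
  show ?case
  proof (cases k)
    case 0 then show ?thesis by (simp add: ec_Suc0)
  next
    case (Suc j)
    have "ec (Suc n) k \<le> ennreal q * (1 + ennreal (real (Suc (Suc j)) * gg)) + ennreal (1 - q) * ennreal (real j * gg)"
      unfolding Suc ec_Suc by (intro add_mono mult_left_mono Suc.IH) auto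
    also have "\<dots> = ennreal (q * (1 + real (Suc (Suc j)) * gg) + (1 - q) * (real j * gg))"
      using q0 q1 gg_nonneg by (simp add: ennreal_plus ennreal_mult)
    also have "q * (1 + real (Suc (Suc j)) * gg) + (1 - q) * (real j * gg) = real k * gg"
      using gg_eq unfolding Suc by (simp add: algebra_simps)
    finally show ?thesis .
  qed
qed

lemma cc_bound: "cc k \<le> ennreal (real k * gg)"
proof -
  have "cc k \<le> (\<integral>\<^sup>+w. (SUP n. ennreal (cnt n k w)) \<partial>SS)"
    unfolding cc_def
  proof (rule nn_integral_mono)
    fix w
    show "ennreal (real (CC k w)) \<le> (SUP n. ennreal (real (cnt n k w)))"
    proof (cases "HH k w")
      case True
      then obtain n where "hit n k w" by (auto simp: HH_def)
      then have "CC k w = cnt n k w" by (rule CC_eq)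
      then show ?thesis by (auto intro: SUP_upper2)
    next
      case False then show ?thesis by (simp add: CC_notHH)
    qed
  qed
  also have "\<dots> = (SUP n. ec n k)"
    unfolding ec_def
    by (rule nn_integral_monotone_convergence_SUP) (auto simp: incseq_def le_fun_def intro!: cnt_mono)
  also have "\<dots> \<le> ennreal (real k * gg)" by (rule SUP_least) (rule ec_bound)
  finally show ?thesis .
qed

lemma hp_le1: "hp k \<le> 1"
proof -
  have "hp k \<le> (\<integral>\<^sup>+w. 1 \<partial>SS)" unfolding hp_def by (rule nn_integral_mono) auto
  then show ?thesis by (simp add: int_one)
qed

definition "hr k = enn2real (hp k)"
definition "cr k = enn2real (cc k)"

lemma hp_fin: "hp k = ennreal (hr k)"
  unfolding hr_def using hp_le1[of k] by (simp add: ennreal_enn2real_if top_unique) (metis ennreal_one_less_top not_le top_unique)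
lemma cc_fin: "cc k = ennreal (cr k)"
  unfolding cr_def using cc_bound[of k] by (simp add: ennreal_enn2real_if) (metis ennreal_less_top not_le top_unique)

lemma hr_nn: "0 \<le> hr k" unfolding hr_def by simp
lemma cr_nn: "0 \<le> cr k" unfolding cr_def by simp
lemma hr_le1: "hr k \<le> 1" using hp_le1[of k] hp_fin[of k] by (simp add: ennreal_le_1)
lemma cr_bd: "cr k \<le> real k * gg"
proof -
  have n: "0 \<le> real k * gg" using gg_nonneg by simp
  have "ennreal (cr k) \<le> ennreal (real k * gg)" using cc_bound[of k] cc_fin[of k] by simp
  then show ?thesis using n by (simp add: ennreal_le_iff)
qed

lemma hr_0: "hr 0 = 1" using hp_0 hp_fin[of 0] by simp
lemma cr_0: "cr 0 = 0" using cc_0 cc_fin[of 0] by (simp add: cr_nn)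

lemma hr_Suc: "hr (Suc j) = q * hr (Suc (Suc j)) + (1 - q) * hr j"
proof -
  have "ennreal (hr (Suc j)) = ennreal (q * hr (Suc (Suc j)) + (1 - q) * hr j)"
    using hp_Suc[of j] q0 q1 hr_nn unfolding hp_fin by (simp add: ennreal_plus ennreal_mult)
  then show ?thesis using q0 q1 hr_nn by (subst (asm) ennreal_inj) auto
qed

lemma cr_Suc: "cr (Suc j) = q * (hr (Suc (Suc j)) + cr (Suc (Suc j))) + (1 - q) * cr j"
proof -
  have "ennreal (cr (Suc j)) = ennreal (q * (hr (Suc (Suc j)) + cr (Suc (Suc j))) + (1 - q) * cr j)"
    using cc_Suc[of j] q0 q1 hr_nn cr_nn unfolding hp_fin cc_fin by (simp add: ennreal_plus ennreal_mult)
  then show ?thesis using q0 q1 hr_nn cr_nn by (subst (asm) ennreal_inj) auto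
qed

lemma hr_1: "hr k = 1"
proof -
  have "1 - hr k = 0"
  proof (rule diff_zero[where a="\<lambda>k. 1 - hr k" and q=q and p="1-q" and B=1])
    show "0 \<le> q" "q < 1 - q" using q0 q1 by auto
    show "1 - hr 0 = 0" using hr_0 by simp
    show "0 \<le> 1 - hr k" for k using hr_le1[of k] by simp
    show "1 - hr k \<le> real k * 1" for k using hr_nn[of k] hr_0 by (cases k) auto
    show "q * (1 - hr (Suc (Suc k)) - (1 - hr (Suc k))) = (1 - q) * (1 - hr (Suc k) - (1 - hr k))" for k
      using hr_Suc[of k] by (simp add: algebra_simps)
  qed
  then show ?thesis by simp
qed

lemma cr_1: "cr k = real k * gg"
proof -
  have "real k * gg - cr k = 0"
  proof (rule diff_zero[where a="\<lambda>k. real k * gg - cr k" and q=q and p="1-q" and B=gg])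
    show "0 \<le> q" "q < 1 - q" using q0 q1 by auto
    show "real 0 * gg - cr 0 = 0" using cr_0 by simp
    show "0 \<le> real k * gg - cr k" for k using cr_bd[of k] by simp
    show "real k * gg - cr k \<le> real k * gg" for k using cr_nn[of k] by simp
    show "q * (real (Suc (Suc k)) * gg - cr (Suc (Suc k)) - (real (Suc k) * gg - cr (Suc k))) =
        (1 - q) * (real (Suc k) * gg - cr (Suc k) - (real k * gg - cr k))" for k
      using cr_Suc[of k] hr_1[of "Suc (Suc k)"] gg_eq by (simp add: algebra_simps)
  qed
  then show ?thesis by simp
qed

definition "GG w = (if \<not> shd w then 1 else if \<not> shd (stl w) then 2
   else if HH 1 (stl (stl w)) then 2 + CC 1 (stl (stl w)) else (0::nat))"

lemma GG_meas[measurable]: "GG \<in> measurable SS (count_space UNIV)"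
  unfolding GG_def by measurable

lemma L_GG: "L_len w = GG w"
proof -
  obtain x y w' where w: "w = x ## y ## w'" by (metis stream.collapse)
  show ?thesis
  proof (cases x)
    case False then show ?thesis unfolding w GG_def by (simp add: L_len_def)
  next
    case True
    show ?thesis
    proof (cases y)
      case False then show ?thesis unfolding w GG_def using True by (simp add: L_len_def)
    next
      case True2: True
      show ?thesis unfolding w GG_def using True True2 by (simp only: L_len_TT) simp
    qed
  qed
qed

lemma int_const: "(\<integral>\<^sup>+w. ennreal c \<partial>SS) = ennreal c"
  by (simp add: nn_integral_const)

lemma comb: "0 \<le> a \<Longrightarrow> 0 \<le> b \<Longrightarrow>
  ennreal q * ennreal a + ennreal (1 - q) * ennreal b = ennreal (q * a + (1 - q) * b)"
  using q0 q1 by (simp add: ennreal_plus ennreal_mult)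

lemma main_ctx: "(\<integral>\<^sup>+w. ennreal (real (L_len w)) \<partial>SS) = ennreal (q * (q * (2 + gg) + (1 - q) * 2) + (1 - q))"
proof -
  have TT: "(\<integral>\<^sup>+w. ennreal (real (GG (True ## True ## w))) \<partial>SS) = ennreal (2 + gg)"
  proof -
    have "(\<integral>\<^sup>+w. ennreal (real (GG (True ## True ## w))) \<partial>SS) =
        (\<integral>\<^sup>+w. 2 * (if HH 1 w then 1 else 0) + ennreal (real (CC 1 w)) \<partial>SS)"
      by (rule nn_integral_cong) (auto simp: GG_def CC_notHH ennreal_plus[symmetric])
    also have "\<dots> = 2 * hp 1 + cc 1"
      unfolding hp_def cc_def by (subst nn_integral_add) (auto simp: nn_integral_cmult)
    also have "\<dots> = ennreal (2 + gg)"
      unfolding hp_fin cc_fin hr_1 cr_1 using gg_nonneg by (simp add: ennreal_plus[symmetric])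
    finally show ?thesis .
  qed
  have T: "(\<integral>\<^sup>+w. ennreal (real (GG (True ## w))) \<partial>SS) = ennreal (q * (2 + gg) + (1 - q) * 2)"
  proof -
    have "(\<integral>\<^sup>+w. ennreal (real (GG (True ## w))) \<partial>SS) =
      ennreal q * (\<integral>\<^sup>+w. ennreal (real (GG (True ## True ## w))) \<partial>SS) +
      ennreal (1 - q) * (\<integral>\<^sup>+w. ennreal (real (GG (True ## False ## w))) \<partial>SS)"
      by (rule decomp[OF q0 q1']) measurable
    also have "(\<integral>\<^sup>+w. ennreal (real (GG (True ## False ## w))) \<partial>SS) = ennreal 2"
      by (simp add: GG_def int_const del: ennreal_numeral)
    also note TT
    also have "ennreal q * ennreal (2 + gg) + ennreal (1 - q) * ennreal 2 = ennreal (q * (2 + gg) + (1 - q) * 2)"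
      using gg_nonneg by (intro comb) auto
    finally show ?thesis .
  qed
  have "(\<integral>\<^sup>+w. ennreal (real (L_len w)) \<partial>SS) = (\<integral>\<^sup>+w. ennreal (real (GG w)) \<partial>SS)"
    by (simp add: L_GG)
  also have "\<dots> = ennreal q * (\<integral>\<^sup>+w. ennreal (real (GG (True ## w))) \<partial>SS) +
      ennreal (1 - q) * (\<integral>\<^sup>+w. ennreal (real (GG (False ## w))) \<partial>SS)"
    by (rule decomp[OF q0 q1']) measurable
  also have "(\<integral>\<^sup>+w. ennreal (real (GG (False ## w))) \<partial>SS) = 1"
    by (simp add: GG_def int_one)
  also note T
  also have "ennreal q * ennreal (q * (2 + gg) + (1 - q) * 2) + ennreal (1 - q) * 1 = ennreal (q * (q * (2 + gg) + (1 - q) * 2) + (1 - q) * 1)"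
    using gg_nonneg q0 q1 by (subst comb[symmetric]) auto
  finally show ?thesis by simp
qed

end

theorem mainTheorem2:
  fixes q p :: real
  assumes "0 \<le> q" and "q < 1/2" and "p = 1 - q"
  shows "(\<integral>\<^sup>+ w. ennreal (real (L_len w)) \<partial>(stream_space (measure_pmf (bernoulli_pmf q))))
           = ennreal (1 + p^2 * q / (p - q))"
proof -
  have e: "q * (q * (2 + gg q) + (1 - q) * 2) + (1 - q) = 1 + p^2 * q / (p - q)"
  proof -
    have g: "gg q = q / (1 - 2 * q)" using gg_def assms(1,2) by blast
    have ne: "1 - 2 * q \<noteq> 0" using assms by simp
    show ?thesis unfolding g assms(3) using ne by (simp add: field_simps power2_eq_square)
  qed
  show ?thesis using main_ctx[OF assms(1,2)] unfolding e .
qed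

end
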